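(* For every default ABMN solution, the central ratio $\frac{n_{-1}-n_0}{m_0-m_{-1}}$ lies in $(0,\infty)$. For every $x\in(0,\infty)$ there is exactly one default ABMN solution whose central ratio equals $x$.
   Context: ABMN system on $\mathbb{Z}$: real variables $a_i,b_i\ge0$, $m_i,n_i$ with, for all $i$, $(a_i+b_i)(m_i+a_i)=a_im_{i+1}+b_im_{i-1}$, $(a_i+b_i)(n_i+b_i)=a_in_{i+1}+b_in_{i-1}$, $(a_i+b_i)^2=b_i(m_{i+1}-m_{i-1})$, $(a_i+b_i)^2=a_i(n_{i-1}-n_{i+1})$. Solutions considered are positive ($a_i,b_i>0$ for all $i$), so $m_{\pm\infty}=\lim_{i\to\pm\infty}m_i$, $n_{\pm\infty}=\lim_{i\to\pm\infty}n_i$ exist in $\mathbb{R}$. A (positive) solution is default if $m_{-\infty}=0$, $n_\infty=0$ and $m_0-m_{-1}=1$. The central ratio is $\frac{n_{-1}-n_0}{m_0-m_{-1}}$. *)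

theory Defs
  imports "HOL-Analysis.Analysis"
begin

definition ABMN :: "(int \<Rightarrow> real) \<Rightarrow> (int \<Rightarrow> real) \<Rightarrow> (int \<Rightarrow> real) \<Rightarrow> (int \<Rightarrow> real) \<Rightarrow> bool" where
  "ABMN a b m n \<longleftrightarrow> (\<forall>i. a i \<ge> 0 \<and> b i \<ge> 0 \<and>
      (a i + b i) * (m i + a i) = a i * m (i+1) + b i * m (i-1) \<and>
      (a i + b i) * (n i + b i) = a i * n (i+1) + b i * n (i-1) \<and>
      (a i + b i)^2 = b i * (m (i+1) - m (i-1)) \<and>
      (a i + b i)^2 = a i * (n (i-1) - n (i+1)))"

definition positive_ABMN :: "(int \<Rightarrow> real) \<Rightarrow> (int \<Rightarrow> real) \<Rightarrow> (int \<Rightarrow> real) \<Rightarrow> (int \<Rightarrow> real) \<Rightarrow> bool" where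
  "positive_ABMN a b m n \<longleftrightarrow> ABMN a b m n \<and> (\<forall>i. a i > 0 \<and> b i > 0)"

definition default_ABMN :: "(int \<Rightarrow> real) \<Rightarrow> (int \<Rightarrow> real) \<Rightarrow> (int \<Rightarrow> real) \<Rightarrow> (int \<Rightarrow> real) \<Rightarrow> bool" where
  "default_ABMN a b m n \<longleftrightarrow> positive_ABMN a b m n \<and>
      (m \<longlongrightarrow> 0) at_bot \<and> (n \<longlongrightarrow> 0) at_top \<and> m 0 - m (-1) = 1"

definition central_ratio :: "(int \<Rightarrow> real) \<Rightarrow> (int \<Rightarrow> real) \<Rightarrow> real" where
  "central_ratio m n = (n (-1) - n 0) / (m 0 - m (-1))"

end

theory Submission
  imports Defs
begin

definition R :: "real \<times> real \<Rightarrow> real \<times> real \<Rightarrow> bool" where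
 "R p q \<longleftrightarrow> fst p > 0 \<and> snd p > 0 \<and> fst q > 0 \<and> snd q > 0 \<and>
    (fst q)^2 = snd q * (2 * fst p + snd p) \<and> fst p * (fst q + 2 * snd q) = (snd p)^2"

lemma root_ex:
  fixes P Q :: real assumes "P > 0" "Q > 0"
  shows "\<exists>y>0. 2*y^2 + P*y = P*Q"
proof -
  define s where "s = sqrt (P^2 + 8*P*Q)"
  have s2: "s^2 = P^2 + 8*P*Q" unfolding s_def using assms by simp
  have "sqrt (P^2) < s" unfolding s_def using assms by (intro real_sqrt_less_mono) auto
  then have sP: "P < s" using assms by simp
  show ?thesis
    apply (rule exI[of _ "(s - P)/4"])
    using sP s2 by (auto simp: power2_eq_square field_simps)
qed

lemma root_uniq:
  fixes P y z :: real assumes "P > 0" "y > 0" "z > 0" "2*y^2 + P*y = 2*z^2 + P*z"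
  shows "y = z"
proof -
  have "(y - z) * (2*(y+z) + P) = 0" using assms(4) by (simp add: power2_eq_square algebra_simps)
  moreover have "2*(y+z) + P > 0" using assms by auto
  ultimately show ?thesis by simp
qed

lemma R_fw_ex: assumes "a > 0" "b > 0" shows "\<exists>q. R (a,b) q"
proof -
  define P where "P = 2*a+b"
  define Q where "Q = b^2/a"
  have P: "P > 0" "Q > 0" using assms by (auto simp: P_def Q_def)
  obtain y where y: "y > 0" "2*y^2 + P*y = P*Q" using root_ex[OF P] by blast
  define z where "z = y^2/P"
  have z: "z > 0" using y P by (simp add: z_def)
  have "y^2 = z * (2*a+b)" using P by (simp add: z_def P_def)
  moreover have "a * (y + 2*z) = b^2"
  proof -
    have "y + 2*z = (P*y + 2*y^2)/P" using P by (simp add: z_def field_simps)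
    also have "\<dots> = (P*Q)/P" using y(2) by (simp add: add.commute)
    also have "\<dots> = Q" using P by simp
    finally show ?thesis using assms by (simp add: Q_def)
  qed
  ultimately show ?thesis using assms y z unfolding R_def by (intro exI[of _ "(y,z)"]) auto
qed

lemma R_bw_ex: assumes "a' > 0" "b' > 0" shows "\<exists>p. R p (a',b')"
proof -
  define P where "P = a'^2/b'"
  define Q where "Q = a'+2*b'"
  have P: "Q > 0" "P > 0" using assms by (auto simp: P_def Q_def)
  obtain y where y: "y > 0" "2*y^2 + Q*y = Q*P" using root_ex[OF P] by blast
  have yP: "y < P"
  proof (rule ccontr)
    assume "\<not> y < P"
    then have "y \<ge> P" by simp
    then have "2*y^2 \<ge> 2*P^2" using P by (simp add: power_mono)
    moreover have "Q*y \<ge> Q*P" using \<open>y \<ge> P\<close> P by simp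
    ultimately show False using y P by (smt (verit) zero_less_power)
  qed
  define x where "x = (P - y)/2"
  have x: "x > 0" using yP by (simp add: x_def)
  have "2*x+y = P" by (simp add: x_def field_simps)
  then have "a'^2 = b' * (2*x+y)" using assms by (simp add: P_def)
  moreover have "x * (a' + 2*b') = y^2"
    using y unfolding x_def Q_def[symmetric] by (simp add: algebra_simps)
  ultimately show ?thesis using assms y x unfolding R_def by (intro exI[of _ "(x,y)"]) auto
qed

lemma R_fw_uniq: assumes "R (a,b) (a1,b1)" "R (a,b) (a2,b2)" shows "a1 = a2 \<and> b1 = b2"
proof -
  define P where "P = 2*a+b"
  have h: "a>0" "b>0" "a1>0" "b1>0" "a2>0" "b2>0" "a1^2 = b1*P" "a2^2 = b2*P"
    "a*(a1+2*b1) = b^2" "a*(a2+2*b2) = b^2" using assms by (auto simp: R_def P_def)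
  have P: "P > 0" using h by (simp add: P_def)
  have e1: "2*a1^2 + P*a1 = P*(b^2/a)"
  proof -
    have "a1+2*b1 = b^2/a" using h by (simp add: field_simps)
    then have "P*(a1+2*b1) = P*(b^2/a)" by simp
    then show ?thesis using h(7) by (simp add: algebra_simps)
  qed
  have e2: "2*a2^2 + P*a2 = P*(b^2/a)"
  proof -
    have "a2+2*b2 = b^2/a" using h by (simp add: field_simps)
    then have "P*(a2+2*b2) = P*(b^2/a)" by simp
    then show ?thesis using h(8) by (simp add: algebra_simps)
  qed
  have "a1 = a2" using root_uniq[OF P h(3) h(5)] e1 e2 by simp
  moreover then have "b1 = b2" using h P by (metis nonzero_mult_div_cancel_right less_irrefl)
  ultimately show ?thesis by simp
qed

lemma R_bw_uniq: assumes "R (a1,b1) (a',b')" "R (a2,b2) (a',b')" shows "a1 = a2 \<and> b1 = b2"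
proof -
  define P where "P = a'^2/b'"
  define Q where "Q = a'+2*b'"
  have h: "a1>0" "b1>0" "a2>0" "b2>0" "a'>0" "b'>0"
    "a1*Q = b1^2" "a2*Q = b2^2" using assms by (auto simp: R_def Q_def)
  have p1: "2*a1+b1 = P" "2*a2+b2 = P" using assms by (auto simp: R_def P_def field_simps)
  have Q: "Q > 0" using h by (simp add: Q_def)
  have e1: "2*b1^2 + Q*b1 = Q*P"
  proof -
    have "Q*P = Q*(2*a1+b1)" using p1 by simp
    also have "\<dots> = 2*(a1*Q) + Q*b1" by (simp add: algebra_simps)
    finally show ?thesis using h(7) by simp
  qed
  have e2: "2*b2^2 + Q*b2 = Q*P"
  proof -
    have "Q*P = Q*(2*a2+b2)" using p1 by simp
    also have "\<dots> = 2*(a2*Q) + Q*b2" by (simp add: algebra_simps)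
    finally show ?thesis using h(8) by simp
  qed
  have "b1 = b2" using root_uniq[OF Q h(2) h(4)] e1 e2 by simp
  then show ?thesis using p1 by simp
qed

definition Fw :: "real \<times> real \<Rightarrow> real \<times> real" where "Fw p = (SOME q. R p q)"
definition Bw :: "real \<times> real \<Rightarrow> real \<times> real" where "Bw q = (SOME p. R p q)"
definition pos :: "real \<times> real \<Rightarrow> bool" where "pos p \<longleftrightarrow> fst p > 0 \<and> snd p > 0"

lemma R_pos: "R p q \<Longrightarrow> pos p \<and> pos q" by (simp add: R_def pos_def)

lemma R_Fw: "pos p \<Longrightarrow> R p (Fw p)"
  unfolding Fw_def pos_def using R_fw_ex[of "fst p" "snd p"] by (auto intro: someI_ex)

lemma R_Bw: "pos q \<Longrightarrow> R (Bw q) q"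
  unfolding Bw_def pos_def using R_bw_ex[of "fst q" "snd q"] by (auto intro: someI_ex)

lemma iter_Fw_pos: "pos p \<Longrightarrow> pos ((Fw^^k) p)"
  by (induction k) (auto dest: R_Fw R_pos)

lemma iter_Bw_pos: "pos p \<Longrightarrow> pos ((Bw^^k) p)"
  by (induction k) (auto dest: R_Bw R_pos)

definition bseq :: "real \<times> real \<Rightarrow> int \<Rightarrow> real \<times> real" where
  "bseq p i = (if 0 \<le> i then (Fw^^nat i) p else (Bw^^nat(-i)) p)"

lemma bseq_R: assumes "pos p" shows "R (bseq p i) (bseq p (i+1))"
proof (cases "0 \<le> i")
  case True
  then have "nat (i+1) = Suc (nat i)" by simp
  then show ?thesis using True assms by (simp add: bseq_def R_Fw iter_Fw_pos)
next
  case False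
  then have e: "nat (-i) = Suc (nat (-(i+1)))" by simp
  have "bseq p (i+1) = (Bw^^nat(-(i+1))) p"
    using False by (cases "i+1 = 0") (auto simp: bseq_def)
  moreover have "bseq p i = Bw ((Bw^^nat(-(i+1))) p)" using False e by (simp add: bseq_def)
  ultimately show ?thesis using assms by (simp add: R_Bw iter_Bw_pos)
qed

lemma bseq0: "bseq p 0 = p" by (simp add: bseq_def)

lemma R_t: assumes "R (a,b) (a',b')"
  shows "(a'/b')^2/(a'/b'+2) = (a/b)*(2*(a/b)+1)"
proof -
  have h: "a>0" "b>0" "a'>0" "b'>0" "a'^2 = b'*(2*a+b)" "a*(a'+2*b') = b^2"
    using assms by (auto simp: R_def)
  have "(a'/b')^2/(a'/b'+2) = a'^2/(b'*(a'+2*b'))"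
    using h(3,4) by (simp add: field_simps power2_eq_square)
  also have "\<dots> = (2*a+b)/(a'+2*b')" unfolding h(5) using h(4) by simp
  also have "a'+2*b' = b^2/a" using h by (simp add: field_simps)
  also have "(2*a+b)/(b^2/a) = (a/b)*(2*(a/b)+1)" using h by (simp add: field_simps power2_eq_square)
  finally show ?thesis .
qed

lemma R_d: assumes "R (a,b) (a',b')" shows "a^2/b \<le> (a/b)^2 * (a'^2/b')"
proof -
  have h: "a>0" "b>0" "a'>0" "b'>0" "a'^2 = b'*(2*a+b)"
    using assms by (auto simp: R_def)
  have "a'^2/b' = 2*a+b" using h by (simp add: field_simps)
  moreover have "a^2/b \<le> (a/b)^2 * (2*a+b)" using h by (simp add: field_simps power2_eq_square)
  ultimately show ?thesis by simp
qed

lemma R_s: assumes "R (a,b) (a',b')" shows "b'^2/a' \<le> (b'/a')^2 * (b^2/a)"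
proof -
  have h: "a>0" "b>0" "a'>0" "b'>0" "a*(a'+2*b') = b^2"
    using assms by (auto simp: R_def)
  have "b^2/a = a'+2*b'" using h by (simp add: field_simps)
  moreover have "b'^2/a' \<le> (b'/a')^2 * (a'+2*b')" using h by (simp add: field_simps power2_eq_square)
  ultimately show ?thesis by simp
qed

definition AA where "AA p i = fst (bseq p i)"
definition BB where "BB p i = snd (bseq p i)"
definition TT where "TT p i = AA p i / BB p i"
definition DD where "DD p i = (AA p i)^2 / BB p i"
definition SS where "SS p i = (BB p i)^2 / AA p i"

context fixes p0 assumes p0: "pos p0" begin

lemma RR: "R (AA p0 i, BB p0 i) (AA p0 (i+1), BB p0 (i+1))"
  using bseq_R[OF p0, of i] by (simp add: AA_def BB_def)

lemma ABpos: "AA p0 i > 0" "BB p0 i > 0"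
  using RR[of i] by (auto simp: R_def)

lemma Tpos: "TT p0 i > 0" using ABpos by (simp add: TT_def)
lemma Dpos: "DD p0 i > 0" using ABpos[of i] by (simp add: DD_def)
lemma Spos: "SS p0 i > 0" using ABpos[of i] by (simp add: SS_def)

lemma T_rel: "(TT p0 (i+1))^2/(TT p0 (i+1)+2) = TT p0 i * (2*TT p0 i + 1)"
  using R_t[OF RR[of i]] by (simp add: TT_def)

lemma T_back: "TT p0 i \<le> TT p0 (i+1) * (TT p0 (i+1) / (TT p0 (i+1) + 2))"
proof -
  have "TT p0 i \<le> TT p0 i * (2*TT p0 i + 1)" using Tpos[of i] by simp
  also have "\<dots> = (TT p0 (i+1))^2/(TT p0 (i+1)+2)" using T_rel by simp
  finally show ?thesis by (simp add: power2_eq_square)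
qed

lemma T_fw: "TT p0 (i+1) \<ge> TT p0 i * (2*TT p0 i + 1)"
proof -
  have "TT p0 i * (2*TT p0 i + 1) = (TT p0 (i+1))^2/(TT p0 (i+1)+2)" using T_rel by simp
  also have "\<dots> \<le> TT p0 (i+1)"
  proof -
    have "(TT p0 (i+1))^2 \<le> TT p0 (i+1) * (TT p0 (i+1)+2)" using Tpos[of "i+1"] by (simp add: power2_eq_square algebra_simps)
    then show ?thesis using Tpos[of "i+1"] by (simp add: pos_divide_le_eq)
  qed
  finally show ?thesis .
qed

lemma frac_mono: fixes x T :: real assumes "0 < x" "x \<le> T" shows "x/(x+2) \<le> T/(T+2)"
  using assms by (simp add: field_simps)

lemma back_geo: "TT p0 (- int k) \<le> (TT p0 0 / (TT p0 0 + 2))^k * TT p0 0"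
proof (induction k)
  case 0 then show ?case by simp
next
  case (Suc k)
  define c where "c = TT p0 0 / (TT p0 0 + 2)"
  have c: "0 < c" "c < 1" using Tpos[of 0] by (auto simp: c_def)
  have "c^k \<le> 1" using c by (simp add: power_le_one)
  then have le: "TT p0 (- int k) \<le> TT p0 0"
    using Suc.IH mult_right_mono[OF \<open>c^k \<le> 1\<close>, of "TT p0 0"] Tpos[of 0] unfolding c_def[symmetric] by linarith
  have e: "- int (Suc k) + 1 = - int k" by simp
  have "TT p0 (- int (Suc k)) \<le> TT p0 (- int k) * (TT p0 (- int k) / (TT p0 (- int k) + 2))"
    using T_back[of "- int (Suc k)"] unfolding e .
  also have "\<dots> \<le> TT p0 (- int k) * c"
    unfolding c_def using frac_mono[OF Tpos le] Tpos[of "- int k"] by (intro mult_left_mono) auto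
  also have "\<dots> \<le> (c^k * TT p0 0) * c" using Suc.IH c unfolding c_def[symmetric] by (intro mult_right_mono) auto
  finally show ?case unfolding c_def by (simp add: algebra_simps)
qed

lemma fw_geo: "TT p0 (int k) \<ge> (1 + 2*TT p0 0)^k * TT p0 0"
proof (induction k)
  case 0 then show ?case by simp
next
  case (Suc k)
  define c where "c = 1 + 2*TT p0 0"
  have c: "1 \<le> c" using Tpos[of 0] by (simp add: c_def)
  have "1 \<le> c^k" using c by (simp add: one_le_power)
  then have le: "TT p0 0 \<le> TT p0 (int k)"
    using Suc.IH mult_right_mono[OF \<open>1 \<le> c^k\<close>, of "TT p0 0"] Tpos[of 0] unfolding c_def[symmetric] by linarith
  have e: "int (Suc k) = int k + 1" by simp
  have "(c^k * TT p0 0) * c \<le> TT p0 (int k) * c" using Suc.IH c unfolding c_def[symmetric]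
    by (intro mult_right_mono) auto
  also have "\<dots> \<le> TT p0 (int k) * (2*TT p0 (int k) + 1)" unfolding c_def
    using le Tpos[of "int k"] by (intro mult_left_mono) auto
  also have "\<dots> \<le> TT p0 (int (Suc k))" unfolding e by (rule T_fw)
  finally show ?case unfolding c_def by (simp add: algebra_simps)
qed

lemma back_small: "\<exists>N::nat. \<forall>k\<ge>N. TT p0 (- int k) \<le> 1/2"
proof -
  define c where "c = TT p0 0 / (TT p0 0 + 2)"
  have c: "0 < c" "c < 1" using Tpos[of 0] by (auto simp: c_def)
  obtain N where N: "c^N < 1/(2*TT p0 0)" using real_arch_pow_inv[OF _ c(2), of "1/(2*TT p0 0)"] Tpos[of 0] by auto
  show ?thesis
  proof (intro exI allI impI)
    fix k assume k: "N \<le> k"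
    have "c^k \<le> c^N" using c k by (intro power_decreasing) auto
    then have "c^k * TT p0 0 \<le> c^N * TT p0 0" using Tpos[of 0] by simp
    also have "\<dots> \<le> 1/2" using N Tpos[of 0] by (simp add: field_simps)
    finally show "TT p0 (- int k) \<le> 1/2" using back_geo[of k] unfolding c_def by simp
  qed
qed

lemma fw_large: "\<exists>N::nat. \<forall>k\<ge>N. TT p0 (int k) \<ge> 2"
proof -
  define c where "c = 1 + 2*TT p0 0"
  have c: "1 < c" using Tpos[of 0] by (auto simp: c_def)
  obtain N where N: "2/TT p0 0 < c^N" using real_arch_pow[OF c] by auto
  show ?thesis
  proof (intro exI allI impI)
    fix k assume k: "N \<le> k"
    have "c^N \<le> c^k" using c k by (intro power_increasing) auto
    then have "c^N * TT p0 0 \<le> c^k * TT p0 0" using Tpos[of 0] by simp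
    moreover have "2 \<le> c^N * TT p0 0" using N Tpos[of 0] by (simp add: field_simps)
    ultimately show "TT p0 (int k) \<ge> 2" using fw_geo[of k] unfolding c_def by simp
  qed
qed

lemma D_ratio: "\<exists>N0::nat. \<forall>j\<le>- int N0. DD p0 (j-1) \<le> 1/4 * DD p0 j"
proof -
  obtain N where N: "\<forall>k\<ge>N. TT p0 (- int k) \<le> 1/2" using back_small by blast
  show ?thesis
  proof (intro exI allI impI)
    fix j assume j: "j \<le> - int N"
    have "TT p0 (j-1) \<le> 1/2" using N[rule_format, of "nat (1-j)"] j by simp
    then have "(TT p0 (j-1))^2 \<le> (1/2)^2" using Tpos[of "j-1"]
      by (intro power_mono) auto
    then have t2: "(TT p0 (j-1))^2 \<le> 1/4" by (simp add: power2_eq_square)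
    have "DD p0 (j-1) \<le> (TT p0 (j-1))^2 * DD p0 j"
      using R_d[OF RR[of "j-1"]] by (simp add: DD_def TT_def)
    also have "\<dots> \<le> 1/4 * DD p0 j" using t2 Dpos[of j] by (intro mult_right_mono) auto
    finally show "DD p0 (j-1) \<le> 1/4 * DD p0 j" .
  qed
qed

lemma S_ratio: "\<exists>N1::nat. \<forall>j\<ge>int N1. SS p0 (j+1) \<le> 1/4 * SS p0 j"
proof -
  obtain N where N: "\<forall>k\<ge>N. TT p0 (int k) \<ge> 2" using fw_large by blast
  show ?thesis
  proof (intro exI allI impI)
    fix j assume j: "int N \<le> j"
    have "TT p0 (j+1) \<ge> 2" using N[rule_format, of "nat (j+1)"] j by simp
    then have "1/TT p0 (j+1) \<le> 1/2" using Tpos[of "j+1"] by (simp add: field_simps)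
    then have "(1/TT p0 (j+1))^2 \<le> (1/2)^2" using Tpos[of "j+1"]
      by (intro power_mono) auto
    then have t2: "(1/TT p0 (j+1))^2 \<le> 1/4" by (simp add: power2_eq_square)
    have "SS p0 (j+1) \<le> (1/TT p0 (j+1))^2 * SS p0 j"
      using R_s[OF RR[of "j"]] by (simp add: SS_def TT_def)
    also have "\<dots> \<le> 1/4 * SS p0 j" using t2 Spos[of j] by (intro mult_right_mono) auto
    finally show "SS p0 (j+1) \<le> 1/4 * SS p0 j" .
  qed
qed

end

lemma eqs:
  fixes a b M0 Mp Mm N0 Np Nm :: real
  assumes "a>0" "b>0" "Mp = M0 + (2*a+b)" "Mm = M0 - a^2/b" "Nm = N0 + (a+2*b)" "Np = N0 - b^2/a"
  shows "(a+b)*(M0+a) = a*Mp + b*Mm \<and> (a+b)*(N0+b) = a*Np + b*Nm \<and>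
         (a+b)^2 = b*(Mp - Mm) \<and> (a+b)^2 = a*(Nm - Np)"
  using assms by (simp add: field_simps power2_eq_square)

lemma lin:
  fixes x y p q :: real
  assumes "x>0" "y>0" "x*p - y*q = x*(x+y)" "y*(p+q) = (x+y)^2"
  shows "q = x^2/y \<and> p = 2*x+y"
proof -
  have "y*(x+y)*q = x*(y*p + y*q) - y*(x*p - y*q)" by (simp add: algebra_simps)
  also have "\<dots> = x*(x+y)^2 - y*(x*(x+y))" using assms(3,4) by (simp add: algebra_simps)
  also have "\<dots> = x^2*(x+y)" by (simp add: algebra_simps power2_eq_square)
  finally have "(y*q)*(x+y) = x^2*(x+y)" by (simp add: algebra_simps)
  moreover have "x+y \<noteq> 0" using assms by simp
  ultimately have "y*q = x^2" by simp
  then have q: "q = x^2/y" using assms by (simp add: field_simps)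
  have "y*p = (x+y)^2 - y*q" using assms(4) by (simp add: algebra_simps)
  also have "\<dots> = y*(2*x+y)" using q assms by (simp add: field_simps power2_eq_square)
  finally have "p = 2*x+y" using assms by simp
  then show ?thesis using q by simp
qed

lemma diffs:
  fixes a b M0 Mp Mm N0 Np Nm :: real
  assumes "a>0" "b>0" "(a+b)*(M0+a) = a*Mp + b*Mm" "(a+b)*(N0+b) = a*Np + b*Nm"
    "(a+b)^2 = b*(Mp - Mm)" "(a+b)^2 = a*(Nm - Np)"
  shows "Mp - M0 = 2*a+b \<and> M0 - Mm = a^2/b \<and> Nm - N0 = a + 2*b \<and> N0 - Np = b^2/a"
proof -
  have m: "M0 - Mm = a^2/b \<and> Mp - M0 = 2*a+b"
    using lin[of a b "Mp - M0" "M0 - Mm"] assms by (simp add: algebra_simps)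
  have n: "N0 - Np = b^2/a \<and> Nm - N0 = 2*b+a"
    using lin[of b a "Nm - N0" "N0 - Np"] assms by (simp add: algebra_simps)
  show ?thesis using m n by simp
qed

context fixes p0 assumes p0: "pos p0" begin

lemma D_summ: "summable (\<lambda>k. DD p0 (i - int k))"
proof -
  obtain N0 where N0: "\<forall>j\<le>- int N0. DD p0 (j-1) \<le> 1/4 * DD p0 j" using D_ratio[OF p0] by blast
  show ?thesis
  proof (rule summable_ratio_test[of "1/4" "N0 + nat i"])
    fix k assume k: "N0 + nat i \<le> k"
    have j: "i - int k \<le> - int N0" using k by linarith
    have e: "i - int (Suc k) = (i - int k) - 1" by simp
    show "norm (DD p0 (i - int (Suc k))) \<le> 1/4 * norm (DD p0 (i - int k))"
      unfolding e using N0[rule_format, OF j] Dpos[OF p0, of "i - int k"] Dpos[OF p0, of "i - int k - 1"] by simp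
  qed simp
qed

lemma S_summ: "summable (\<lambda>k. SS p0 (i + int k))"
proof -
  obtain N1 where N1: "\<forall>j\<ge>int N1. SS p0 (j+1) \<le> 1/4 * SS p0 j" using S_ratio[OF p0] by blast
  show ?thesis
  proof (rule summable_ratio_test[of "1/4" "N1 + nat (-i)"])
    fix k assume k: "N1 + nat (-i) \<le> k"
    have j: "i + int k \<ge> int N1" using k by linarith
    have e: "i + int (Suc k) = (i + int k) + 1" by simp
    show "norm (SS p0 (i + int (Suc k))) \<le> 1/4 * norm (SS p0 (i + int k))"
      unfolding e using N1[rule_format, OF j] Spos[OF p0, of "i + int k"] Spos[OF p0, of "i + int k + 1"] by simp
  qed simp
qed

end

definition MM where "MM p i = (\<Sum>k. DD p (i - int k))"
definition NN where "NN p i = (\<Sum>k. SS p (i + int k))"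

context fixes p0 assumes p0: "pos p0" begin

lemma MM_diff: "MM p0 i - MM p0 (i-1) = DD p0 i"
proof -
  have "(\<Sum>k. DD p0 (i - int (Suc k))) = MM p0 i - DD p0 i"
    using suminf_split_head[OF D_summ[OF p0, of i]] by (simp add: MM_def)
  moreover have "(\<Sum>k. DD p0 (i - int (Suc k))) = MM p0 (i-1)"
    unfolding MM_def by (rule suminf_cong) (simp add: algebra_simps)
  ultimately show ?thesis by simp
qed

lemma NN_diff: "NN p0 i - NN p0 (i+1) = SS p0 i"
proof -
  have "(\<Sum>k. SS p0 (i + int (Suc k))) = NN p0 i - SS p0 i"
    using suminf_split_head[OF S_summ[OF p0, of i]] by (simp add: NN_def)
  moreover have "(\<Sum>k. SS p0 (i + int (Suc k))) = NN p0 (i+1)"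
    unfolding NN_def by (rule suminf_cong) (simp add: algebra_simps)
  ultimately show ?thesis by simp
qed

lemma MM_lim: "(MM p0 \<longlongrightarrow> 0) at_bot"
proof (rule tendstoI)
  fix e :: real assume e: "0 < e"
  obtain N where N: "\<forall>n\<ge>N. norm (\<Sum>k. DD p0 (0 - int (k + n))) < e"
    using suminf_exist_split[OF e D_summ[OF p0, of 0]] by blast
  show "eventually (\<lambda>i. dist (MM p0 i) 0 < e) at_bot"
    unfolding eventually_at_bot_linorder
  proof (intro exI allI impI)
    fix i assume i: "i \<le> - int N"
    have "MM p0 i = (\<Sum>k. DD p0 (0 - int (k + nat (-i))))"
      unfolding MM_def by (rule suminf_cong) (use i in simp)
    then show "dist (MM p0 i) 0 < e" using N[rule_format, of "nat (-i)"] i by simp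
  qed
qed

lemma NN_lim: "(NN p0 \<longlongrightarrow> 0) at_top"
proof (rule tendstoI)
  fix e :: real assume e: "0 < e"
  obtain N where N: "\<forall>n\<ge>N. norm (\<Sum>k. SS p0 (0 + int (k + n))) < e"
    using suminf_exist_split[OF e S_summ[OF p0, of 0]] by blast
  show "eventually (\<lambda>i. dist (NN p0 i) 0 < e) at_top"
    unfolding eventually_at_top_linorder
  proof (intro exI allI impI)
    fix i assume i: "i \<ge> int N"
    have "NN p0 i = (\<Sum>k. SS p0 (0 + int (k + nat i)))"
      unfolding NN_def by (rule suminf_cong) (use i in \<open>simp add: add.commute\<close>)
    then show "dist (NN p0 i) 0 < e" using N[rule_format, of "nat i"] i by simp
  qed
qed

lemma exist_ctx:
  assumes sq: "(fst p0)^2 = snd p0"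
  shows "default_ABMN (AA p0) (BB p0) (MM p0) (NN p0) \<and>
         central_ratio (MM p0) (NN p0) = fst p0 + 2 * snd p0"
proof -
  have step: "MM p0 (i+1) = MM p0 i + (2*AA p0 i + BB p0 i)" for i
  proof -
    have "MM p0 (i+1) - MM p0 i = DD p0 (i+1)" using MM_diff[of "i+1"] by simp
    also have "\<dots> = 2*AA p0 i + BB p0 i"
      using RR[OF p0, of i] by (simp add: DD_def R_def field_simps)
    finally show ?thesis by simp
  qed
  have stepm: "MM p0 (i-1) = MM p0 i - (AA p0 i)^2 / BB p0 i" for i
    using MM_diff[of i] by (simp add: DD_def)
  have stepn: "NN p0 (i-1) = NN p0 i + (AA p0 i + 2*BB p0 i)" for i
  proof -
    have "NN p0 (i-1) - NN p0 i = SS p0 (i-1)" using NN_diff[of "i-1"] by simp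
    also have "\<dots> = AA p0 i + 2*BB p0 i"
      using RR[OF p0, of "i-1"] by (simp add: SS_def R_def field_simps)
    finally show ?thesis by simp
  qed
  have stepp: "NN p0 (i+1) = NN p0 i - (BB p0 i)^2 / AA p0 i" for i
    using NN_diff[of i] by (simp add: SS_def)
  have abmn: "ABMN (AA p0) (BB p0) (MM p0) (NN p0)"
    unfolding ABMN_def
  proof
    fix i
    show "AA p0 i \<ge> 0 \<and> BB p0 i \<ge> 0 \<and>
      (AA p0 i + BB p0 i) * (MM p0 i + AA p0 i) = AA p0 i * MM p0 (i+1) + BB p0 i * MM p0 (i-1) \<and>
      (AA p0 i + BB p0 i) * (NN p0 i + BB p0 i) = AA p0 i * NN p0 (i+1) + BB p0 i * NN p0 (i-1) \<and>
      (AA p0 i + BB p0 i)^2 = BB p0 i * (MM p0 (i+1) - MM p0 (i-1)) \<and>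
      (AA p0 i + BB p0 i)^2 = AA p0 i * (NN p0 (i-1) - NN p0 (i+1))"
      using eqs[OF ABpos[OF p0, of i] step[of i] stepm[of i] stepn[of i] stepp[of i]]
        ABpos[OF p0, of i] by simp
  qed
  have a0: "AA p0 0 = fst p0" "BB p0 0 = snd p0" by (simp_all add: AA_def BB_def bseq0)
  have m0: "MM p0 0 - MM p0 (-1) = 1"
    using stepm[of 0] a0 sq ABpos[OF p0, of 0] by simp
  have n0: "NN p0 (-1) - NN p0 0 = fst p0 + 2 * snd p0"
    using stepn[of 0] a0 by simp
  show ?thesis
    unfolding default_ABMN_def positive_ABMN_def central_ratio_def
    using abmn ABpos[OF p0] MM_lim NN_lim m0 n0 by simp
qed

end

lemma existence:
  assumes x: "(x::real) > 0"
  shows "\<exists>a b m n. default_ABMN a b m n \<and> central_ratio m n = x"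
proof -
  obtain y where y: "y > 0" "2*y^2 + 1*y = 1*x" using root_ex[of 1 x] x by auto
  have p: "pos (y, y^2)" using y by (simp add: pos_def)
  have "default_ABMN (AA (y, y^2)) (BB (y, y^2)) (MM (y, y^2)) (NN (y, y^2)) \<and>
         central_ratio (MM (y, y^2)) (NN (y, y^2)) = y + 2 * y^2"
    using exist_ctx[OF p] by simp
  moreover have "y + 2*y^2 = x" using y by simp
  ultimately show ?thesis by metis
qed

lemma pos_diffs:
  assumes "positive_ABMN a b m n"
  shows "m (i+1) - m i = 2*a i + b i \<and> m i - m (i-1) = (a i)^2/b i \<and>
         n (i-1) - n i = a i + 2*b i \<and> n i - n (i+1) = (b i)^2/a i" "a i > 0" "b i > 0"
proof -
  have h: "a i > 0" "b i > 0" using assms by (auto simp: positive_ABMN_def)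
  have e: "(a i + b i) * (m i + a i) = a i * m (i+1) + b i * m (i-1)"
      "(a i + b i) * (n i + b i) = a i * n (i+1) + b i * n (i-1)"
      "(a i + b i)^2 = b i * (m (i+1) - m (i-1))"
      "(a i + b i)^2 = a i * (n (i-1) - n (i+1))"
    using assms unfolding positive_ABMN_def ABMN_def by blast+
  show "m (i+1) - m i = 2*a i + b i \<and> m i - m (i-1) = (a i)^2/b i \<and>
         n (i-1) - n i = a i + 2*b i \<and> n i - n (i+1) = (b i)^2/a i"
    using diffs[OF h e] .
  show "a i > 0" "b i > 0" using h by auto
qed

lemma pos_R:
  assumes "positive_ABMN a b m n"
  shows "R (a i, b i) (a (i+1), b (i+1))"
proof -
  note d0 = pos_diffs[OF assms, of i] and d1 = pos_diffs[OF assms, of "i+1"]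
  have "(a (i+1))^2/b (i+1) = 2*a i + b i" using d0(1) d1(1) by simp
  then have r1: "(a (i+1))^2 = b (i+1) * (2*a i + b i)" using d1(3) by (simp add: field_simps)
  have "a (i+1) + 2*b (i+1) = (b i)^2/a i" using d0(1) d1(1) by simp
  then have r2: "a i * (a (i+1) + 2*b (i+1)) = (b i)^2" using d0(2) by (simp add: field_simps)
  show ?thesis unfolding R_def using r1 r2 d0(2,3) d1(2,3) by simp
qed

lemma ratio0:
  assumes "default_ABMN a b m n"
  shows "b 0 = (a 0)^2 \<and> central_ratio m n = a 0 + 2*(a 0)^2"
proof -
  have p: "positive_ABMN a b m n" and m1: "m 0 - m (-1) = 1" using assms by (auto simp: default_ABMN_def)
  note d = pos_diffs[OF p, of 0]
  have "(a 0)^2 / b 0 = 1" using d(1) d(2) m1 by simp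
  then have b0: "b 0 = (a 0)^2" using d(3) by (simp add: field_simps)
  show ?thesis using d(1) d(2) m1 b0 by (simp add: central_ratio_def)
qed

lemma ratio_pos: assumes "default_ABMN a b m n" shows "central_ratio m n > 0"
proof -
  have "a 0 > 0" using pos_diffs(2)[of a b m n 0] assms by (auto simp: default_ABMN_def)
  then have "a 0 + 2*(a 0)^2 > 0" by (simp add: add_pos_nonneg)
  then show ?thesis using ratio0[OF assms] by simp
qed

lemma uniq:
  assumes A: "default_ABMN a b m n" and B: "default_ABMN a' b' m' n'"
    and r: "central_ratio m n = central_ratio m' n'"
  shows "a = a' \<and> b = b' \<and> m = m' \<and> n = n'"
proof -
  have pA: "positive_ABMN a b m n" and pB: "positive_ABMN a' b' m' n'"
    using A B by (auto simp: default_ABMN_def)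
  have "2*(a 0)^2 + 1*a 0 = 2*(a' 0)^2 + 1*a' 0" using ratio0[OF A] ratio0[OF B] r by simp
  then have a0: "a 0 = a' 0" using root_uniq[of 1 "a 0" "a' 0"] pos_diffs(2)[OF pA, of 0] pos_diffs(2)[OF pB, of 0] by simp
  then have b0: "b 0 = b' 0" using ratio0[OF A] ratio0[OF B] by simp
  have ab: "a i = a' i \<and> b i = b' i" for i
  proof (induction i rule: int_induct[where k=0])
    case base then show ?case using a0 b0 by simp
  next
    case (step1 i)
    then show ?case using R_fw_uniq[of "a i" "b i" "a (i+1)" "b (i+1)" "a' (i+1)" "b' (i+1)"]
      pos_R[OF pA, of i] pos_R[OF pB, of i] by simp
  next
    case (step2 i)
    then show ?case using R_bw_uniq[of "a (i-1)" "b (i-1)" "a i" "b i" "a' (i-1)" "b' (i-1)"]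
      pos_R[OF pA, of "i-1"] pos_R[OF pB, of "i-1"] by simp
  qed
  have mc: "m i - m' i = m 0 - m' 0" for i
  proof (induction i rule: int_induct[where k=0])
    case base then show ?case by simp
  next
    case (step1 i)
    have "m (i+1) - m i = m' (i+1) - m' i" using pos_diffs(1)[OF pA, of i] pos_diffs(1)[OF pB, of i] ab[of i] by simp
    then show ?case using step1 by simp
  next
    case (step2 i)
    have "m i - m (i-1) = m' i - m' (i-1)" using pos_diffs(1)[OF pA, of i] pos_diffs(1)[OF pB, of i] ab[of i] by simp
    then show ?case using step2 by simp
  qed
  have nc: "n i - n' i = n 0 - n' 0" for i
  proof (induction i rule: int_induct[where k=0])
    case base then show ?case by simp
  next
    case (step1 i)
    have "n i - n (i+1) = n' i - n' (i+1)" using pos_diffs(1)[OF pA, of i] pos_diffs(1)[OF pB, of i] ab[of i] by simp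
    then show ?case using step1 by simp
  next
    case (step2 i)
    have "n (i-1) - n i = n' (i-1) - n' i" using pos_diffs(1)[OF pA, of i] pos_diffs(1)[OF pB, of i] ab[of i] by simp
    then show ?case using step2 by simp
  qed
  have "((\<lambda>i. m i - m' i) \<longlongrightarrow> 0 - 0) at_bot"
    using A B by (intro tendsto_diff) (auto simp: default_ABMN_def)
  moreover have "((\<lambda>i. m i - m' i) \<longlongrightarrow> m 0 - m' 0) at_bot"
  proof -
    have "(\<lambda>i. m i - m' i) = (\<lambda>i. m 0 - m' 0)" using mc by auto
    then show ?thesis by simp
  qed
  ultimately have "m 0 - m' 0 = 0" using tendsto_unique[OF trivial_limit_at_bot_linorder] by fastforce
  then have mm: "m = m'" using mc by (auto intro!: ext simp: algebra_simps)
  have "((\<lambda>i. n i - n' i) \<longlongrightarrow> 0 - 0) at_top"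
    using A B by (intro tendsto_diff) (auto simp: default_ABMN_def)
  moreover have "((\<lambda>i. n i - n' i) \<longlongrightarrow> n 0 - n' 0) at_top"
  proof -
    have "(\<lambda>i. n i - n' i) = (\<lambda>i. n 0 - n' 0)" using nc by auto
    then show ?thesis by simp
  qed
  ultimately have "n 0 - n' 0 = 0" using tendsto_unique[OF trivial_limit_at_top_linorder] by fastforce
  then have nn: "n = n'" using nc by (auto intro!: ext simp: algebra_simps)
  show ?thesis using ab mm nn by (auto intro!: ext)
qed

theorem mainTheorem8:
  shows "(\<forall>a b m n. default_ABMN a b m n \<longrightarrow> central_ratio m n > 0)
    \<and> (\<forall>x::real. x > 0 \<longrightarrow>
         (\<exists>!s. default_ABMN (fst s) (fst (snd s)) (fst (snd (snd s))) (snd (snd (snd s)))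
               \<and> central_ratio (fst (snd (snd s))) (snd (snd (snd s))) = x))"
proof (intro conjI allI impI)
  fix a b m n assume "default_ABMN a b m n" then show "central_ratio m n > 0" by (rule ratio_pos)
next
  fix x :: real assume x: "x > 0"
  obtain a b m n where ex: "default_ABMN a b m n" "central_ratio m n = x" using existence[OF x] by blast
  show "\<exists>!s. default_ABMN (fst s) (fst (snd s)) (fst (snd (snd s))) (snd (snd (snd s)))
               \<and> central_ratio (fst (snd (snd s))) (snd (snd (snd s))) = x"
  proof (rule ex1I[of _ "(a,b,m,n)"])
    show "default_ABMN (fst (a,b,m,n)) (fst (snd (a,b,m,n))) (fst (snd (snd (a,b,m,n)))) (snd (snd (snd (a,b,m,n))))
               \<and> central_ratio (fst (snd (snd (a,b,m,n)))) (snd (snd (snd (a,b,m,n)))) = x" using ex by simp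
  next
    fix s assume s: "default_ABMN (fst s) (fst (snd s)) (fst (snd (snd s))) (snd (snd (snd s)))
               \<and> central_ratio (fst (snd (snd s))) (snd (snd (snd s))) = x"
    obtain a' b' m' n' where sd: "s = (a',b',m',n')" by (cases s) auto
    have "a' = a \<and> b' = b \<and> m' = m \<and> n' = n" using uniq[of a' b' m' n' a b m n] s ex unfolding sd by simp
    then show "s = (a,b,m,n)" using sd by simp
  qed
qed

end
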